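(* Let $(S,\Delta,\mathbb{P})$ be a probability space, $(U,d)$ a separable metric space, $\mathfrak{X}$ the set of $U$-valued random variables on $S$, $r\geq0$, and $\mathcal{I}$ an admissible ideal on $\mathbb{N}$. Then for every sequence $\underline{X}=\{X_n\}$ in $\mathfrak{X}$, the set $\Gamma^{r^s}_{\underline{X}}(\mathcal{I}^{\mathbb{P}})$ is closed in $(\mathfrak{X}^0,\rho)$.
   Context: The Ky Fan metric is $\rho(X,Y)=\inf\{\varepsilon>0:\mathbb{P}(d(X,Y)>\varepsilon)\leq\varepsilon\}$; $\mathfrak{X}^0$ is the set of equivalence classes of $\mathfrak{X}$ under almost sure equality, on which $\rho$ is a metric. An ideal on $\mathbb{N}$ is a family $\mathcal{I}\subseteq\mathcal{P}(\mathbb{N})$ with $\varnothing\in\mathcal{I}$, closed under finite unions and under subsets; it is admissible if $\mathbb{N}\notin\mathcal{I}$ and $\{t\}\in\mathcal{I}$ for every $t\in\mathbb{N}$. $\Gamma^{r^s}_{\underline{X}}(\mathcal{I}^{\mathbb{P}})$ is the set of $Y\in\mathfrak{X}$ with $\{n:\mathbb{P}(d(X_n,Y)<r+\varepsilon)>1-\delta\}\notin\mathcal{I}$ for all $\varepsilon,\delta>0$. *)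

theory Defs
  imports "HOL-Probability.Probability"
begin

definition ideal_on_nat :: "nat set set \<Rightarrow> bool" where
  "ideal_on_nat I \<longleftrightarrow> {} \<in> I
     \<and> (\<forall>A\<in>I. \<forall>B\<in>I. A \<union> B \<in> I)
     \<and> (\<forall>A\<in>I. \<forall>B. B \<subseteq> A \<longrightarrow> B \<in> I)"

definition admissible_ideal :: "nat set set \<Rightarrow> bool" where
  "admissible_ideal I \<longleftrightarrow> ideal_on_nat I \<and> UNIV \<notin> I \<and> (\<forall>t. {t} \<in> I)"

definition rand_vars :: "'a measure \<Rightarrow> ('a \<Rightarrow> 'b::metric_space) set" where
  "rand_vars M = {X. X \<in> borel_measurable M}"

text \<open>Ky Fan metric (a pseudometric on random variables, a metric on a.s.-classes).\<close>
definition ky_fan :: "'a measure \<Rightarrow> ('a \<Rightarrow> 'b::metric_space) \<Rightarrow> ('a \<Rightarrow> 'b) \<Rightarrow> real" where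
  "ky_fan M X Y = Inf {e. e > 0 \<and> measure M {w\<in>space M. dist (X w) (Y w) > e} \<le> e}"

text \<open>Closedness in the quotient space (X^0, rho) of a set A of random variables:
  every a.s.-class in the rho-closure of the classes of A is the class of an element of A.\<close>
definition ky_fan_closed :: "'a measure \<Rightarrow> ('a \<Rightarrow> 'b::metric_space) set \<Rightarrow> bool" where
  "ky_fan_closed M A \<longleftrightarrow>
     (\<forall>Y\<in>rand_vars M. (\<forall>e>0. \<exists>Z\<in>A. ky_fan M Z Y < e)
        \<longrightarrow> (\<exists>Z\<in>A. AE w in M. Z w = Y w))"

definition rough_stat_limit_set ::
  "'a measure \<Rightarrow> nat set set \<Rightarrow> real \<Rightarrow> (nat \<Rightarrow> 'a \<Rightarrow> 'b::metric_space) \<Rightarrow> ('a \<Rightarrow> 'b) set" where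
  "rough_stat_limit_set M I r X =
     {Y\<in>rand_vars M. \<forall>\<epsilon>>0. \<forall>\<delta>>0.
        {n. measure M {w\<in>space M. dist (X n w) (Y w) < r + \<epsilon>} > 1 - \<delta>} \<notin> I}"

end

theory Submission
  imports Defs
begin

lemma dist_inf_repr:
  fixes C :: "'b::metric_space set"
  assumes cl: "closure C = UNIV"
  shows "dist x z = (INF q\<in>C. dist x q + dist q z)"
proof -
  have ne: "C \<noteq> {}" using cl by auto
  have bdd: "bdd_below ((\<lambda>q. dist x q + dist q z) ` C)"
    by (rule bdd_belowI[of _ 0]) auto
  have ge: "dist x z \<le> (INF q\<in>C. dist x q + dist q z)"
    by (rule cINF_greatest[OF ne]) (rule dist_triangle)
  have le: "(INF q\<in>C. dist x q + dist q z) \<le> dist x z + e" if "e > 0" for e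
  proof -
    have "x \<in> closure C" using cl by auto
    then obtain q where q: "q \<in> C" "dist q x < e/2"
      using closure_approachable[of x C] \<open>e>0\<close> by (meson half_gt_zero)
    have "(INF q\<in>C. dist x q + dist q z) \<le> dist x q + dist q z"
      by (rule cINF_lower[OF bdd q(1)])
    also have "\<dots> \<le> dist x z + e"
      using q(2) dist_triangle[of q z x] dist_commute[of x q] by linarith
    finally show ?thesis .
  qed
  have "(INF q\<in>C. dist x q + dist q z) \<le> dist x z"
    by (rule field_le_epsilon) (rule le)
  then show ?thesis using ge by (rule antisym[rotated])
qed

lemma dist_measurable:
  fixes X Z :: "'a \<Rightarrow> 'b::metric_space"
  assumes sep: "separable_space (euclidean :: 'b topology)"
    and X: "X \<in> borel_measurable M" and Z: "Z \<in> borel_measurable M"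
  shows "(\<lambda>w. dist (X w) (Z w)) \<in> borel_measurable M"
proof -
  obtain C :: "'b set" where C: "countable C" "closure C = UNIV"
    using sep unfolding separable_space_def by auto
  have "(\<lambda>w. INF q\<in>C. dist (X w) q + dist q (Z w)) \<in> borel_measurable M"
  proof (rule borel_measurable_cINF_real[OF C(1)])
    fix q assume "q \<in> C"
    have c1: "continuous_on UNIV (\<lambda>x. dist x q)" by (intro continuous_intros)
    have c2: "continuous_on UNIV (\<lambda>x. dist q x)" by (intro continuous_intros)
    show "(\<lambda>w. dist (X w) q + dist q (Z w)) \<in> borel_measurable M"
      by (intro borel_measurable_add borel_measurable_continuous_on[OF c1 X]
          borel_measurable_continuous_on[OF c2 Z])
  qed
  moreover have "(\<lambda>w. dist (X w) (Z w)) = (\<lambda>w. INF q\<in>C. dist (X w) q + dist q (Z w))"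
    using dist_inf_repr[OF C(2)] by blast
  ultimately show ?thesis by simp
qed


theorem proposition3p11:
  fixes M :: "'a measure" and X :: "nat \<Rightarrow> 'a \<Rightarrow> 'b::metric_space"
    and r :: real and I :: "nat set set"
  assumes "prob_space M"
    and "separable_space (euclidean :: 'b topology)"
    and "r \<ge> 0"
    and "admissible_ideal I"
    and "\<And>n. X n \<in> rand_vars M"
  shows "ky_fan_closed M (rough_stat_limit_set M I r X)"
proof -
  interpret prob_space M by (rule assms(1))
  note sep = assms(2)
  have Xm: "X n \<in> borel_measurable M" for n using assms(5) by (simp add: rand_vars_def)
  have sub: "\<And>A B. A \<in> I \<Longrightarrow> B \<subseteq> A \<Longrightarrow> B \<in> I"
    using assms(4) unfolding admissible_ideal_def ideal_on_nat_def by blast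
  let ?A = "rough_stat_limit_set M I r X"
  show ?thesis unfolding ky_fan_closed_def
  proof (intro ballI impI)
    fix Y assume Yr: "Y \<in> rand_vars M" and H: "\<forall>e>0. \<exists>Z\<in>?A. ky_fan M Z Y < e"
    have Ym: "Y \<in> borel_measurable M" using Yr by (simp add: rand_vars_def)
    have "Y \<in> ?A" unfolding rough_stat_limit_set_def
    proof (intro CollectI conjI allI impI Yr)
      fix \<epsilon> \<delta> :: real assume ep: "\<epsilon> > 0" and dp: "\<delta> > 0"
      define \<eta> where "\<eta> = min (\<epsilon>/2) (\<delta>/2)"
      have etap: "\<eta> > 0" using ep dp by (simp add: \<eta>_def)
      obtain Z where ZA: "Z \<in> ?A" and kf: "ky_fan M Z Y < \<eta>" using H etap by blast
      have Zm: "Z \<in> borel_measurable M" using ZA by (simp add: rough_stat_limit_set_def rand_vars_def)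
      let ?S = "{e. e > 0 \<and> measure M {w\<in>space M. dist (Z w) (Y w) > e} \<le> e}"
      have "(1::real) \<in> ?S" by (simp add: prob_le_1)
      then have "?S \<noteq> {}" by blast
      then obtain e where eS: "e \<in> ?S" and elt: "e < \<eta>"
        using kf cInf_lessD[of ?S \<eta>] unfolding ky_fan_def by blast
      have epos: "e > 0" and eB: "measure M {w\<in>space M. dist (Z w) (Y w) > e} \<le> e" using eS by auto
      have A0: "{n. measure M {w\<in>space M. dist (X n w) (Z w) < r + \<epsilon>/2} > 1 - \<delta>/2} \<notin> I"
        using ZA ep dp unfolding rough_stat_limit_set_def by auto
      have incl: "{n. measure M {w\<in>space M. dist (X n w) (Z w) < r + \<epsilon>/2} > 1 - \<delta>/2}
          \<subseteq> {n. measure M {w\<in>space M. dist (X n w) (Y w) < r + \<epsilon>} > 1 - \<delta>}"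
      proof
        fix n assume "n \<in> {n. measure M {w\<in>space M. dist (X n w) (Z w) < r + \<epsilon>/2} > 1 - \<delta>/2}"
        then have Pn: "measure M {w\<in>space M. dist (X n w) (Z w) < r + \<epsilon>/2} > 1 - \<delta>/2" by simp
        define P where "P = {w\<in>space M. dist (X n w) (Z w) < r + \<epsilon>/2}"
        define B where "B = {w\<in>space M. dist (Z w) (Y w) > e}"
        define Q where "Q = {w\<in>space M. dist (X n w) (Y w) < r + \<epsilon>}"
        have m1[measurable]: "(\<lambda>w. dist (X n w) (Z w)) \<in> borel_measurable M"
          by (rule dist_measurable[OF sep Xm Zm])
        have m2[measurable]: "(\<lambda>w. dist (Z w) (Y w)) \<in> borel_measurable M"
          by (rule dist_measurable[OF sep Zm Ym])
        have m3[measurable]: "(\<lambda>w. dist (X n w) (Y w)) \<in> borel_measurable M"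
          by (rule dist_measurable[OF sep Xm Ym])
        have Ps: "P \<in> sets M" unfolding P_def by measurable
        have Bs: "B \<in> sets M" unfolding B_def by measurable
        have Qs: "Q \<in> sets M" unfolding Q_def by measurable
        have PBQ: "P - B \<subseteq> Q"
        proof
          fix w assume "w \<in> P - B"
          then have w: "w \<in> space M" "dist (X n w) (Z w) < r + \<epsilon>/2" "\<not> dist (Z w) (Y w) > e"
            unfolding P_def B_def by auto
          have "dist (X n w) (Y w) \<le> dist (X n w) (Z w) + dist (Z w) (Y w)" by (rule dist_triangle)
          moreover have "e \<le> \<epsilon>/2" using elt by (simp add: \<eta>_def)
          ultimately show "w \<in> Q" using w unfolding Q_def by auto
        qed
        have "measure M P \<le> measure M ((P - B) \<union> B)"
          using Ps Bs by (intro finite_measure_mono) auto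
        also have "\<dots> \<le> measure M (P - B) + measure M B"
          using Ps Bs by (intro measure_subadditive) (auto simp: emeasure_eq_measure)
        also have "measure M (P - B) \<le> measure M Q"
          using PBQ Qs by (intro finite_measure_mono)
        finally have "measure M P \<le> measure M Q + measure M B" by simp
        moreover have "e \<le> \<delta>/2" using elt by (simp add: \<eta>_def)
        ultimately have "measure M Q > 1 - \<delta>" using Pn eB unfolding P_def B_def by linarith
        then show "n \<in> {n. measure M {w\<in>space M. dist (X n w) (Y w) < r + \<epsilon>} > 1 - \<delta>}"
          unfolding Q_def by simp
      qed
      show "{n. measure M {w\<in>space M. dist (X n w) (Y w) < r + \<epsilon>} > 1 - \<delta>} \<notin> I"
        using A0 incl sub by blast
    qed
    then show "\<exists>Z\<in>?A. AE w in M. Z w = Y w" by auto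
  qed
qed

end
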